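(* Let $n\ge 2$ and let $S$ be an admissible peak set in $S^B_n$. Then $\max\{d_H(\sigma,\rho) : \sigma,\rho\in P^B(S;n)\}=n$.
   Context: $S^B_n$ is the set of bijections $\sigma$ of $\{-n,\dots,-1,1,\dots,n\}$ with $\sigma(-i)=-\sigma(i)$ for all $i$; a signed permutation is written in one-line notation $\sigma(1)\cdots\sigma(n)$. A signed permutation $\sigma$ has a peak at index $i\in\{2,\dots,n-1\}$ if $\sigma(i-1)<\sigma(i)>\sigma(i+1)$ (usual order on integers). $Peak(\sigma)$ is the set of indices where $\sigma$ has a peak, and for $S\subseteq[n]$, $P^B(S;n)=\{\sigma\in S^B_n : Peak(\sigma)=S\}$. $S$ is an admissible peak set if $P^B(S;n)\neq\emptyset$ (equivalently, $S\subseteq\{2,\dots,n-1\}$ and $S$ contains no two consecutive integers). The Hamming metric is $d_H(\sigma,\rho)=|\{i\in[n] : \sigma(i)\neq\rho(i)\}|$. *)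

theory Defs
  imports Main
begin

text \<open>Signed permutations of {-n..-1,1..n}, represented as functions int => int
  that are the identity outside this domain.\<close>

definition signed_dom :: "nat \<Rightarrow> int set" where
  "signed_dom n = {i. 1 \<le> \<bar>i\<bar> \<and> \<bar>i\<bar> \<le> int n}"

definition signed_perms :: "nat \<Rightarrow> (int \<Rightarrow> int) set" where
  "signed_perms n = {\<sigma>. bij_betw \<sigma> (signed_dom n) (signed_dom n)
      \<and> (\<forall>i\<in>signed_dom n. \<sigma> (- i) = - \<sigma> i)
      \<and> (\<forall>i. i \<notin> signed_dom n \<longrightarrow> \<sigma> i = i)}"

definition peak_set :: "nat \<Rightarrow> (int \<Rightarrow> int) \<Rightarrow> nat set" where
  "peak_set n \<sigma> = {i. 2 \<le> i \<and> i \<le> n - 1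
      \<and> \<sigma> (int i - 1) < \<sigma> (int i) \<and> \<sigma> (int i) > \<sigma> (int i + 1)}"

definition PB :: "nat set \<Rightarrow> nat \<Rightarrow> (int \<Rightarrow> int) set" where
  "PB S n = {\<sigma> \<in> signed_perms n. peak_set n \<sigma> = S}"

definition admissible_peak_set :: "nat set \<Rightarrow> nat \<Rightarrow> bool" where
  "admissible_peak_set S n \<longleftrightarrow> PB S n \<noteq> {}"

definition hamming :: "nat \<Rightarrow> (int \<Rightarrow> int) \<Rightarrow> (int \<Rightarrow> int) \<Rightarrow> nat" where
  "hamming n \<sigma> \<rho> = card {i \<in> {1..n}. \<sigma> (int i) \<noteq> \<rho> (int i)}"

end

theory Submission
  imports Defs
begin

lemma mono_map:
  fixes V W :: "int set"
  assumes "finite V" "finite W" "card V = card W"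
  shows "\<exists>f. (\<forall>v\<in>V. f v \<in> W) \<and> (\<forall>v\<in>V. \<forall>v'\<in>V. v < v' \<longrightarrow> f v < f v')"
proof -
  define ys where "ys = sorted_list_of_set W"
  define r where "r v = card {w\<in>V. w < v}" for v
  have len: "length ys = card W" by (simp add: ys_def)
  have sw: "sorted_wrt (<) ys" by (simp add: ys_def)
  have st: "set ys = W" using assms by (simp add: ys_def)
  have rlt: "r v < card W" if "v\<in>V" for v
  proof -
    have "{w\<in>V. w < v} \<subset> V" using that by auto
    then show ?thesis unfolding r_def using assms psubset_card_mono by metis
  qed
  have rmono: "r v < r v'" if "v\<in>V" "v'\<in>V" "v<v'" for v v'
  proof -
    have "{w\<in>V. w < v} \<subset> {w\<in>V. w < v'}" using that by auto
    then show ?thesis unfolding r_def using assms psubset_card_mono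
      by (metis (no_types, lifting) finite_subset mem_Collect_eq subsetI)
  qed
  show ?thesis
  proof (rule exI[of _ "\<lambda>v. ys ! r v"], intro conjI ballI impI)
    fix v assume "v \<in> V" then show "ys ! r v \<in> W" using rlt len st nth_mem by metis
  next
    fix v v' assume "v \<in> V" "v' \<in> V" "v < v'"
    then show "ys ! r v < ys ! r v'" using rlt rmono len sw sorted_wrt_nth_less by metis
  qed
qed

lemma fin_dom: "finite (signed_dom n)"
proof -
  have "signed_dom n \<subseteq> {- int n..int n}" unfolding signed_dom_def by auto
  then show ?thesis by (rule finite_subset) simp
qed

theorem theorem4p8:
  fixes n :: nat and S :: "nat set"
  assumes "n \<ge> 2" and "admissible_peak_set S n"
  shows "Max {hamming n \<sigma> \<rho> | \<sigma> \<rho>. \<sigma> \<in> PB S n \<and> \<rho> \<in> PB S n} = n"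
proof -
  obtain \<sigma> where s: "\<sigma> \<in> PB S n" using assms(2) unfolding admissible_peak_set_def by auto
  have sp: "\<sigma> \<in> signed_perms n" and pk: "peak_set n \<sigma> = S" using s by (auto simp: PB_def)
  have bij: "bij_betw \<sigma> (signed_dom n) (signed_dom n)"
    and odd: "\<And>i. i \<in> signed_dom n \<Longrightarrow> \<sigma> (- i) = - \<sigma> i"
    using sp unfolding signed_perms_def by auto
  have injs: "inj_on \<sigma> (signed_dom n)" using bij bij_betw_def by blast
  have imgs: "\<sigma> i \<in> signed_dom n" if "i \<in> signed_dom n" for i
    using bij that bij_betwE by blast
  define P where "P = {1..int n}"
  have Psub: "P \<subseteq> signed_dom n" unfolding P_def signed_dom_def by auto
  have negdom: "- x \<in> signed_dom n \<longleftrightarrow> x \<in> signed_dom n" for x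
    unfolding signed_dom_def by auto
  define V where "V = \<sigma> ` P"
  have Vsub: "V \<subseteq> signed_dom n" using Psub imgs V_def by auto
  have injP: "inj_on \<sigma> P" using injs Psub inj_on_subset by blast
  have finV: "finite V" unfolding V_def P_def by simp
  define W where "W = uminus ` V"
  have finW: "finite W" unfolding W_def using finV by simp
  have cardVW: "card V = card W" unfolding W_def by (simp add: card_image)
  have disj: "v \<in> V \<Longrightarrow> v \<in> W \<Longrightarrow> False" for v
  proof -
    assume "v \<in> V" "v \<in> W"
    then obtain a b where ab: "a \<in> P" "b \<in> P" "v = \<sigma> a" "v = - \<sigma> b"
      unfolding V_def W_def by auto
    have "- b \<in> signed_dom n" using ab Psub negdom by auto
    moreover have "\<sigma> (- b) = \<sigma> a" using ab odd Psub by auto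
    ultimately have "a = - b" using injs ab Psub by (metis inj_on_def subsetD)
    then show False using ab unfolding P_def by auto
  qed
  obtain f where fW: "\<And>v. v\<in>V \<Longrightarrow> f v \<in> W"
    and fm: "\<And>v v'. v\<in>V \<Longrightarrow> v'\<in>V \<Longrightarrow> v < v' \<Longrightarrow> f v < f v'"
    using mono_map[OF finV finW cardVW] by blast
  have fiff: "f v < f v' \<longleftrightarrow> v < v'" if "v\<in>V" "v'\<in>V" for v v'
    using fm[OF that] fm[OF that(2,1)] by (metis less_asym linorder_neqE)
  have finj: "f v = f v' \<Longrightarrow> v = v'" if "v\<in>V" "v'\<in>V" for v v'
    using fm[OF that] fm[OF that(2,1)] by (metis less_irrefl linorder_neqE)
  have sV: "\<sigma> i \<in> V" if "i \<in> P" for i using that V_def by auto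
  have Wdom: "w \<in> W \<Longrightarrow> w \<in> signed_dom n" for w
    using Vsub negdom unfolding W_def by auto
  have negW: "w \<in> W \<Longrightarrow> - w \<in> V" for w unfolding W_def by auto
  define \<rho> where "\<rho> i = (if 1 \<le> i \<and> i \<le> int n then f (\<sigma> i)
      else if - int n \<le> i \<and> i \<le> -1 then - f (\<sigma> (- i)) else i)" for i
  have dom_cases: "i \<in> signed_dom n \<longleftrightarrow> i \<in> P \<or> - i \<in> P" for i
    unfolding signed_dom_def P_def by auto
  have rpos: "\<rho> i = f (\<sigma> i)" if "i \<in> P" for i using that unfolding \<rho>_def P_def by auto
  have rneg: "\<rho> i = - f (\<sigma> (- i))" if "- i \<in> P" for i using that unfolding \<rho>_def P_def by auto
  have rimg: "\<rho> i \<in> signed_dom n" if "i \<in> signed_dom n" for i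
  proof -
    from that dom_cases consider "i \<in> P" | "- i \<in> P" by blast
    then show ?thesis
    proof cases
      case 1 then show ?thesis using rpos sV fW Wdom by auto
    next
      case 2 then show ?thesis using rneg sV fW Wdom negdom by metis
    qed
  qed
  have rinj: "inj_on \<rho> (signed_dom n)"
  proof (rule inj_onI)
    fix i j assume i: "i \<in> signed_dom n" and j: "j \<in> signed_dom n" and e: "\<rho> i = \<rho> j"
    have inW: "a \<in> P \<Longrightarrow> f (\<sigma> a) \<in> W" for a using sV fW by auto
    from i dom_cases consider "i \<in> P" | "- i \<in> P" by blast
    then show "i = j"
    proof cases
      case 1
      from j dom_cases consider "j \<in> P" | "- j \<in> P" by blast
      then show ?thesis
      proof cases
        case j1: 1
        then show ?thesis using 1 e rpos finj sV injP inj_on_def by metis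
      next
        case 2
        then have "f (\<sigma> i) = - f (\<sigma> (-j))" using 1 e rpos rneg by metis
        then show ?thesis using inW[OF 1] inW[OF 2] negW disj by metis
      qed
    next
      case i2: 2
      from j dom_cases consider "j \<in> P" | "- j \<in> P" by blast
      then show ?thesis
      proof cases
        case 1
        then have "f (\<sigma> j) = - f (\<sigma> (-i))" using i2 e rpos rneg by metis
        then show ?thesis using inW[OF 1] inW[OF i2] negW disj by metis
      next
        case 2
        then have "f (\<sigma> (-i)) = f (\<sigma> (-j))" using i2 e rneg by simp
        then have "\<sigma> (-i) = \<sigma> (-j)" using finj sV 2 i2 by metis
        then have "-i = -j" using injP 2 i2 inj_on_def by metis
        then show ?thesis by simp
      qed
    qed
  qed
  have rbij: "bij_betw \<rho> (signed_dom n) (signed_dom n)"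
  proof -
    have "\<rho> ` signed_dom n \<subseteq> signed_dom n" using rimg by auto
    then have "\<rho> ` signed_dom n = signed_dom n" using endo_inj_surj[OF fin_dom _ rinj] by blast
    then show ?thesis unfolding bij_betw_def using rinj by blast
  qed
  have rodd: "\<forall>i\<in>signed_dom n. \<rho> (- i) = - \<rho> i"
  proof
    fix i assume "i \<in> signed_dom n"
    then consider "i \<in> P" | "- i \<in> P" using dom_cases by blast
    then show "\<rho> (- i) = - \<rho> i"
    proof cases
      case 1 then show ?thesis using rpos rneg[of "-i"] by simp
    next
      case 2 then show ?thesis using rneg rpos[of "-i"] by simp
    qed
  qed
  have rid: "\<forall>i. i \<notin> signed_dom n \<longrightarrow> \<rho> i = i"
    unfolding \<rho>_def signed_dom_def by auto
  have rsp: "\<rho> \<in> signed_perms n" unfolding signed_perms_def using rbij rodd rid by blast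
  have rpk: "peak_set n \<rho> = S"
  proof -
    have "peak_set n \<rho> = peak_set n \<sigma>"
      unfolding peak_set_def
    proof (rule Collect_cong)
      fix i :: nat
      show "(2 \<le> i \<and> i \<le> n - 1 \<and> \<rho> (int i - 1) < \<rho> (int i) \<and> \<rho> (int i + 1) < \<rho> (int i)) =
            (2 \<le> i \<and> i \<le> n - 1 \<and> \<sigma> (int i - 1) < \<sigma> (int i) \<and> \<sigma> (int i + 1) < \<sigma> (int i))"
      proof (cases "2 \<le> i \<and> i \<le> n - 1")
        case True
        then have a: "int i - 1 \<in> P" "int i \<in> P" "int i + 1 \<in> P" unfolding P_def by auto
        show ?thesis using True rpos[OF a(1)] rpos[OF a(2)] rpos[OF a(3)]
            fiff[OF sV[OF a(1)] sV[OF a(2)]] fiff[OF sV[OF a(3)] sV[OF a(2)]] by simp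
      next
        case False then show ?thesis by blast
      qed
    qed
    then show ?thesis using pk by simp
  qed
  have rPB: "\<rho> \<in> PB S n" using rsp rpk by (simp add: PB_def)
  have ham: "hamming n \<sigma> \<rho> = n"
  proof -
    have "{i \<in> {1..n}. \<sigma> (int i) \<noteq> \<rho> (int i)} = {1..n}"
    proof safe
      fix i assume "i \<in> {1..n}" "\<sigma> (int i) = \<rho> (int i)"
      then have a: "int i \<in> P" unfolding P_def by auto
      have "\<rho> (int i) \<in> W" using rpos[OF a] fW[OF sV[OF a]] by simp
      then have "\<sigma> (int i) \<in> W" using \<open>\<sigma> (int i) = \<rho> (int i)\<close> by simp
      then show False using sV[OF a] disj by blast
    qed
    then show ?thesis unfolding hamming_def by simp
  qed
  define M where "M = {hamming n \<sigma> \<rho> | \<sigma> \<rho>. \<sigma> \<in> PB S n \<and> \<rho> \<in> PB S n}"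
  have le: "m \<le> n" if "m \<in> M" for m
  proof -
    from that obtain a b where "m = hamming n a b" unfolding M_def by auto
    moreover have "card {i \<in> {1..n}. a (int i) \<noteq> b (int i)} \<le> card {1..n}"
      by (rule card_mono) auto
    ultimately show ?thesis unfolding hamming_def by simp
  qed
  have mem: "n \<in> M" unfolding M_def mem_Collect_eq
    by (rule exI[of _ \<sigma>], rule exI[of _ \<rho>]) (use s rPB ham in simp)
  have "M \<subseteq> {..n}" using le by auto
  then have "finite M" by (rule finite_subset) simp
  then have "Max M = n" using le mem by (intro Max_eqI) auto
  then show ?thesis unfolding M_def .
qed

end
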